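(* Consider the standard DC program $(P)$ under Assumption A. Let $\{x^k\}$ and $\{y^k\}$ (with $y^k\in\partial h(x^k)$) be well-defined and bounded sequences generated by DCA for $(P)$ from $x^0\in\operatorname{dom}\partial h$. Suppose that (a) $f$ is continuous on $\operatorname{dom}f$; (b) $f$ satisfies the Łojasiewicz subgradient inequality at every cluster point of $\{x^k\}$; (c) $\rho_g+\rho_h>0$; (d) $h$ is differentiable with locally Lipschitz continuous gradient. Then $\{x^k\}$ converges.
   Context: $\Gamma_0(\mathbb{R}^n)$ is the set of proper, lower semicontinuous, convex functions $\mathbb{R}^n\to(-\infty,\infty]$. Let $g,h\in\Gamma_0(\mathbb{R}^n)$ and $f=g-h$ with convention $\infty-\infty=\infty$. Problem $(P)$: $\inf\{f(x):x\in\mathbb{R}^n\}$. Assumption A: $g,h\in\Gamma_0(\mathbb{R}^n)$ and the solution set of $(P)$ is nonempty. DCA: given $x^0\in\operatorname{dom}\partial h$, for $k=0,1,\dots$ choose $y^k\in\partial h(x^k)$ and $x^{k+1}\in\operatorname{argmin}\{g(x)-\langle y^k,x\rangle: x\in\mathbb{R}^n\}$. Convexity moduli: $\rho_g,\rho_h\ge0$ are constants such that for all $x,z$, all $w\in\partial g(x)$, $v\in\partial h(x)$: $g(z)\ge g(x)+\langle w,z-x\rangle+\frac{\rho_g}{2}\|z-x\|^2$ and $h(z)\ge h(x)+\langle v,z-x\rangle+\frac{\rho_h}{2}\|z-x\|^2$. For a proper lsc $\phi:\mathbb{R}^n\to(-\infty,\infty]$, the Fréchet subdifferential at $x\in\operatorname{dom}\phi$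 is $\partial^F\phi(x)=\{y:\liminf_{z\to x,z\neq x}\frac{\phi(z)-\phi(x)-\langle y,z-x\rangle}{\|z-x\|}\ge0\}$ ($\emptyset$ if $x\notin\operatorname{dom}\phi$), and the limiting subdifferential is $\partial^L\phi(x)=\{y:\exists x^j\to x,\ \phi(x^j)\to\phi(x),\ y^j\in\partial^F\phi(x^j),\ y^j\to y\}$. $\phi$ satisfies the Łojasiewicz subgradient inequality at $x^*$ if there exist $\theta\in[0,1)$, $M>0$ and a neighbourhood $\mathcal V$ of $x^*$ such that $|\phi(x)-\phi(x^* )|^\theta\le M\|y\|$ for all $x\in\mathcal V$ and all $y\in\partial^L\phi(x)$ (convention $0^0=1$). *)

theory Defs
  imports "HOL-Analysis.Analysis"
begin

definition proper_fun :: "('a \<Rightarrow> ereal) \<Rightarrow> bool" where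
  "proper_fun f \<longleftrightarrow> (\<forall>x. f x \<noteq> -\<infinity>) \<and> (\<exists>x. f x \<noteq> \<infinity>)"

definition lsc_fun :: "('a::topological_space \<Rightarrow> ereal) \<Rightarrow> bool" where
  "lsc_fun f \<longleftrightarrow> (\<forall>x. f x \<le> Liminf (at x) f)"

definition convex_fun :: "('a::real_vector \<Rightarrow> ereal) \<Rightarrow> bool" where
  "convex_fun f \<longleftrightarrow> (\<forall>x y t. 0 < t \<and> t < 1 \<longrightarrow>
      f ((1 - t) *\<^sub>R x + t *\<^sub>R y) \<le> ereal (1 - t) * f x + ereal t * f y)"

definition Gamma0 :: "('a::euclidean_space \<Rightarrow> ereal) set" where
  "Gamma0 = {f. proper_fun f \<and> lsc_fun f \<and> convex_fun f}"

definition edom :: "('a \<Rightarrow> ereal) \<Rightarrow> 'a set" where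
  "edom f = {x. f x < \<infinity>}"

definition subdiff :: "('a::real_inner \<Rightarrow> ereal) \<Rightarrow> 'a \<Rightarrow> 'a set" where
  "subdiff f x = {w. \<bar>f x\<bar> \<noteq> \<infinity> \<and> (\<forall>z. f z \<ge> f x + ereal (inner w (z - x)))}"

text \<open>DC objective with the convention \<infinity> - \<infinity> = \<infinity>
  (for proper g, h the values are never -\<infinity>).\<close>
definition dc_fun :: "('a \<Rightarrow> ereal) \<Rightarrow> ('a \<Rightarrow> ereal) \<Rightarrow> 'a \<Rightarrow> ereal" where
  "dc_fun g h x = (if g x = \<infinity> \<or> h x = \<infinity> then \<infinity> else g x - h x)"

definition DCA_seq :: "('a::real_inner \<Rightarrow> ereal) \<Rightarrow> ('a \<Rightarrow> ereal) \<Rightarrow> (nat \<Rightarrow> 'a) \<Rightarrow> (nat \<Rightarrow> 'a) \<Rightarrow> bool" where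
  "DCA_seq g h x y \<longleftrightarrow> (\<forall>k. y k \<in> subdiff h (x k) \<and>
      (\<forall>z. g (x (Suc k)) - ereal (inner (y k) (x (Suc k))) \<le> g z - ereal (inner (y k) z)))"

definition convexity_modulus :: "('a::real_inner \<Rightarrow> ereal) \<Rightarrow> real \<Rightarrow> bool" where
  "convexity_modulus g \<rho> \<longleftrightarrow> \<rho> \<ge> 0 \<and> (\<forall>x z. \<forall>w\<in>subdiff g x.
      g z \<ge> g x + ereal (inner w (z - x)) + ereal (\<rho> / 2 * (norm (z - x))\<^sup>2))"

definition frechet_subdiff :: "('a::real_inner \<Rightarrow> ereal) \<Rightarrow> 'a \<Rightarrow> 'a set" where
  "frechet_subdiff \<phi> x = (if \<bar>\<phi> x\<bar> = \<infinity> then {} else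
     {y. Liminf (at x) (\<lambda>z. (\<phi> z - \<phi> x - ereal (inner y (z - x))) / ereal (norm (z - x))) \<ge> 0})"

definition limiting_subdiff :: "('a::real_inner \<Rightarrow> ereal) \<Rightarrow> 'a \<Rightarrow> 'a set" where
  "limiting_subdiff \<phi> x = {y. \<exists>xs ys. xs \<longlonglongrightarrow> x \<and> ((\<lambda>j. \<phi> (xs j)) \<longlonglongrightarrow> \<phi> x) \<and>
      (\<forall>j. ys j \<in> frechet_subdiff \<phi> (xs j)) \<and> ys \<longlonglongrightarrow> y}"

text \<open>Power with the convention 0^0 = 1.\<close>
definition loj_pow :: "real \<Rightarrow> real \<Rightarrow> real" where
  "loj_pow a \<theta> = (if a = 0 then (if \<theta> = 0 then 1 else 0) else a powr \<theta>)"

text \<open>Lojasiewicz subgradient inequality at xs (xs is required to lie in dom \<phi>,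
  so that |\<phi>(x) - \<phi>(xs)| makes sense).\<close>
definition lojasiewicz_at :: "('a::real_inner \<Rightarrow> ereal) \<Rightarrow> 'a \<Rightarrow> bool" where
  "lojasiewicz_at \<phi> xs \<longleftrightarrow> \<bar>\<phi> xs\<bar> \<noteq> \<infinity> \<and>
     (\<exists>\<theta> M V. 0 \<le> \<theta> \<and> \<theta> < 1 \<and> M > 0 \<and> open V \<and> xs \<in> V \<and>
       (\<forall>x\<in>V. \<forall>y\<in>limiting_subdiff \<phi> x.
          loj_pow \<bar>real_of_ereal (\<phi> x) - real_of_ereal (\<phi> xs)\<bar> \<theta> \<le> M * norm y))"

definition cluster_point :: "(nat \<Rightarrow> 'a::topological_space) \<Rightarrow> 'a \<Rightarrow> bool" where
  "cluster_point x c \<longleftrightarrow> (\<exists>r. strict_mono r \<and> (x \<circ> r) \<longlonglongrightarrow> c)"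

end

theory Submission
  imports Defs
begin

lemma amgm_aux:
  fixes a b \<theta> :: real
  assumes "0 \<le> \<theta>" "\<theta> < 1" "0 < a" "0 \<le> b"
  shows "a powr \<theta> * b powr (1-\<theta>) \<le> \<theta>*a + (1-\<theta>)*b"
proof (cases "b = 0")
  case True thus ?thesis using assms by simp
next
  case False thus ?thesis using assms Youngs_inequality_0[of \<theta> "1-\<theta>" a b] by simp
qed

lemma fin_ereal: "\<bar>e\<bar> \<noteq> \<infinity> \<Longrightarrow> e = ereal (real_of_ereal e)"
  by (cases e) auto

lemma subgrad_eq_grad:
  fixes h :: "'a::euclidean_space \<Rightarrow> ereal"
  assumes y: "y \<in> subdiff h p" and fin: "\<And>z. \<bar>h z\<bar> \<noteq> \<infinity>"
    and der: "((\<lambda>u. real_of_ereal (h u)) has_derivative (\<lambda>d. inner Gp d)) (at p)"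
  shows "y = Gp"
proof -
  have ineq: "real_of_ereal (h p) + inner y (u - p) \<le> real_of_ereal (h u)" for u
  proof -
    have 1: "h u \<ge> h p + ereal (inner y (u - p))" using y unfolding subdiff_def by auto
    have 2: "h u = ereal (real_of_ereal (h u))" "h p = ereal (real_of_ereal (h p))"
      using fin_ereal[OF fin] by blast+
    have "ereal (real_of_ereal (h p)) + ereal (inner y (u - p)) \<le> ereal (real_of_ereal (h u))"
      using 1 2 by metis
    thus ?thesis by simp
  qed
  have d2: "((\<lambda>u. real_of_ereal (h u) - inner y u) has_derivative (\<lambda>d. inner Gp d - inner y d)) (at p)"
    by (rule has_derivative_diff[OF der has_derivative_inner_right[OF has_derivative_ident]])
  have "(\<lambda>d. inner Gp d - inner y d) = (\<lambda>_. 0)"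
  proof (rule has_derivative_local_min[OF d2])
    show "\<forall>\<^sub>F u in at p. real_of_ereal (h p) - inner y p \<le> real_of_ereal (h u) - inner y u"
    proof (intro always_eventually allI)
      fix u show "real_of_ereal (h p) - inner y p \<le> real_of_ereal (h u) - inner y u"
        using ineq[of u] by (simp add: inner_diff_right)
    qed
  qed
  from fun_cong[OF this, of "Gp - y"] have "inner Gp (Gp - y) - inner y (Gp - y) = 0" by simp
  hence "inner (Gp - y) (Gp - y) = 0" by (simp add: inner_diff_left)
  thus ?thesis by simp
qed

lemma frechet_sub_limiting: "v \<in> frechet_subdiff \<phi> p \<Longrightarrow> v \<in> limiting_subdiff \<phi> p"
  unfolding limiting_subdiff_def
  by (rule CollectI, rule exI[of _ "\<lambda>_. p"], rule exI[of _ "\<lambda>_. v"]) (simp add: tendsto_const)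


lemma frechet_lemma:
  fixes g h :: "'a::euclidean_space \<Rightarrow> ereal"
  assumes gp: "\<bar>g p\<bar> \<noteq> \<infinity>" and sub: "\<And>z. g z \<ge> g p + ereal (inner y (z - p))"
    and gnm: "\<And>z. g z \<noteq> -\<infinity>" and fin: "\<And>z. \<bar>h z\<bar> \<noteq> \<infinity>"
    and der: "((\<lambda>u. real_of_ereal (h u)) has_derivative (\<lambda>d. inner Gp d)) (at p)"
  shows "y - Gp \<in> frechet_subdiff (dc_fun g h) p"
proof -
  define H where "H u = real_of_ereal (h u)" for u
  define Gr where "Gr u = real_of_ereal (g u)" for u
  have hH: "h u = ereal (H u)" for u unfolding H_def by (rule fin_ereal[OF fin])
  have gpG: "g p = ereal (Gr p)" unfolding Gr_def by (rule fin_ereal[OF gp])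
  have fp: "dc_fun g h p = ereal (Gr p - H p)" using gpG hH unfolding dc_fun_def by simp
  define q where "q z = - (H z - H p - inner Gp (z - p)) / norm (z - p)" for z
  have "((\<lambda>z. norm ((H z - H p) - inner Gp (z - p)) / norm (z - p)) \<longlongrightarrow> 0) (at p)"
    using der unfolding has_derivative_iff_norm H_def by auto
  moreover have "norm (q z) = norm ((H z - H p) - inner Gp (z - p)) / norm (z - p)" for z
    unfolding q_def by (simp add: abs_minus_commute)
  ultimately have "((\<lambda>z. norm (q z)) \<longlongrightarrow> 0) (at p)" by simp
  hence "(q \<longlongrightarrow> 0) (at p)" by (rule tendsto_norm_zero_cancel)
  hence "((\<lambda>z. ereal (q z)) \<longlongrightarrow> ereal 0) (at p)" by (rule tendsto_ereal)
  hence L0: "Liminf (at p) (\<lambda>z. ereal (q z)) = 0"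
    by (intro lim_imp_Liminf) (auto simp: zero_ereal_def)
  have pw: "ereal (q z) \<le> (dc_fun g h z - dc_fun g h p - ereal (inner (y - Gp) (z - p))) / ereal (norm (z - p))"
    if "z \<noteq> p" for z
  proof (cases "g z = \<infinity>")
    case True
    have "norm (z - p) > 0" using that by simp
    thus ?thesis using True unfolding fp by (simp add: dc_fun_def)
  next
    case False
    have gz: "g z = ereal (Gr z)" unfolding Gr_def using False gnm[of z] by (cases "g z") auto
    have n: "norm (z - p) > 0" using that by simp
    have s: "Gr z \<ge> Gr p + inner y (z - p)" using sub[of z] unfolding gz gpG by simp
    have "q z * norm (z - p) \<le> (Gr z - H z - (Gr p - H p) - inner (y - Gp) (z - p))"
    proof -
      have qn: "q z * norm (z - p) = -(H z - H p - inner Gp (z - p))"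
        using n unfolding q_def by simp
      show ?thesis unfolding qn inner_diff_left using s by linarith
    qed
    hence "q z \<le> (Gr z - H z - (Gr p - H p) - inner (y - Gp) (z - p)) / norm (z - p)"
      using n by (simp add: pos_le_divide_eq)
    thus ?thesis using n unfolding dc_fun_def gz hH gpG by simp
  qed
  have "Liminf (at p) (\<lambda>z. ereal (q z)) \<le> Liminf (at p) (\<lambda>z. (dc_fun g h z - dc_fun g h p - ereal (inner (y - Gp) (z - p))) / ereal (norm (z - p)))"
    by (rule Liminf_mono) (auto simp: eventually_at intro!: exI[of _ 1] pw)
  thus ?thesis unfolding frechet_subdiff_def L0 using fp by simp
qed


lemma norm_telescope:
  fixes x :: "nat \<Rightarrow> 'a::real_normed_vector"
  shows "norm (x (q + n) - x q) \<le> (\<Sum>i<n. norm (x (Suc (q + i)) - x (q + i)))"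
proof (induction n)
  case 0 then show ?case by simp
next
  case (Suc n)
  have "norm (x (q + Suc n) - x q) \<le> norm (x (Suc (q + n)) - x (q + n)) + norm (x (q + n) - x q)"
    using norm_triangle_ineq[of "x (Suc (q + n)) - x (q + n)" "x (q + n) - x q"] by simp
  thus ?case using Suc by simp
qed

lemma sq_step:
  fixes D D0 K \<Delta> :: real
  assumes "0 \<le> D" "0 \<le> D0" "0 \<le> K" "0 \<le> \<Delta>" "D^2 \<le> D0 * (K * \<Delta>)"
  shows "2 * D \<le> D0 + K * \<Delta>"
proof -
  have e: "(D0 + K*\<Delta>)^2 = (D0 - K*\<Delta>)^2 + 4*(D0*(K*\<Delta>))" by algebra
  have e2: "(2*D)^2 = 4 * D^2" by algebra
  have "0 \<le> (D0 - K*\<Delta>)^2" by (rule zero_le_power2)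
  hence "(2*D)^2 \<le> (D0 + K * \<Delta>)^2" unfolding e e2 using assms(5) by linarith
  moreover have "0 \<le> D0 + K * \<Delta>" using assms(2,3,4) by simp
  ultimately show ?thesis by (rule power2_le_imp_le)
qed

theorem theorem4:
  fixes g h :: "'a::euclidean_space \<Rightarrow> ereal"
    and x y :: "nat \<Rightarrow> 'a"
    and \<rho>g \<rho>h :: real
  assumes gG: "g \<in> Gamma0" and hG: "h \<in> Gamma0"
    and sol: "\<exists>xs. \<forall>z. dc_fun g h xs \<le> dc_fun g h z"
    and dca: "DCA_seq g h x y"
    and bx: "bounded (range x)" and "bounded (range y)"
    and mg: "convexity_modulus g \<rho>g" and mh: "convexity_modulus h \<rho>h"
    and cont: "continuous_on (edom (dc_fun g h)) (dc_fun g h)"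
    and loj: "\<And>c. cluster_point x c \<Longrightarrow> lojasiewicz_at (dc_fun g h) c"
    and rho: "\<rho>g + \<rho>h > 0"
    and hdiff: "\<exists>G. (\<forall>z. \<bar>h z\<bar> \<noteq> \<infinity> \<and>
                   ((\<lambda>u. real_of_ereal (h u)) has_derivative (\<lambda>d. inner (G z) d)) (at z)) \<and>
                (\<forall>z. \<exists>e>0. \<exists>L. \<forall>u\<in>ball z e. \<forall>v\<in>ball z e. norm (G u - G v) \<le> L * norm (u - v))"
  shows "convergent x"
proof -
  define f where "f = dc_fun g h"
  from hdiff obtain G where GG: "(\<forall>z. \<bar>h z\<bar> \<noteq> \<infinity> \<and>
                   ((\<lambda>u. real_of_ereal (h u)) has_derivative (\<lambda>d. inner (G z) d)) (at z)) \<and>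
                (\<forall>z. \<exists>e>0. \<exists>L. \<forall>u\<in>ball z e. \<forall>v\<in>ball z e. norm (G u - G v) \<le> L * norm (u - v))" ..
  have Gall: "\<forall>z. \<bar>h z\<bar> \<noteq> \<infinity> \<and>
                   ((\<lambda>u. real_of_ereal (h u)) has_derivative (\<lambda>d. inner (G z) d)) (at z)"
    using GG by (rule conjunct1)
  have Glip: "\<And>z. \<exists>e>0. \<exists>L. \<forall>u\<in>ball z e. \<forall>v\<in>ball z e. norm (G u - G v) \<le> L * norm (u - v)"
    using GG by simp
  have hfin: "\<And>z. \<bar>h z\<bar> \<noteq> \<infinity>" using Gall by simp
  have Gder: "\<And>z. ((\<lambda>u. real_of_ereal (h u)) has_derivative (\<lambda>d. inner (G z) d)) (at z)"
    using Gall by simp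
  have gnm: "g z \<noteq> -\<infinity>" for z using gG unfolding Gamma0_def proper_fun_def by auto
  obtain z0 where z0: "g z0 \<noteq> \<infinity>" using gG unfolding Gamma0_def proper_fun_def by auto
  have yk: "y k \<in> subdiff h (x k)" for k using dca unfolding DCA_seq_def by auto
  have amin: "g (x (Suc k)) - ereal (inner (y k) (x (Suc k))) \<le> g z - ereal (inner (y k) z)" for k z
    using dca unfolding DCA_seq_def by auto
  have yG: "y k = G (x k)" for k using subgrad_eq_grad[OF yk hfin Gder] .
  have gfin: "\<bar>g (x (Suc k))\<bar> \<noteq> \<infinity>" for k
  proof -
    have "g (x (Suc k)) - ereal (inner (y k) (x (Suc k))) \<le> g z0 - ereal (inner (y k) z0)"
      by (rule amin)
    moreover have "g z0 - ereal (inner (y k) z0) < \<infinity>" using z0 gnm[of z0] by (cases "g z0") auto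
    ultimately have "g (x (Suc k)) \<noteq> \<infinity>" by auto
    thus ?thesis using gnm[of "x (Suc k)"] by (cases "g (x (Suc k))") auto
  qed
  define Gr where "Gr u = real_of_ereal (g u)" for u
  define H where "H u = real_of_ereal (h u)" for u
  define F where "F k = Gr (x k) - H (x k)" for k
  have hH: "h u = ereal (H u)" for u unfolding H_def by (rule fin_ereal[OF hfin])
  have gx: "g (x (Suc k)) = ereal (Gr (x (Suc k)))" for k unfolding Gr_def by (rule fin_ereal[OF gfin])
  have gsub: "g z \<ge> g (x (Suc k)) + ereal (inner (y k) (z - x (Suc k)))" for k z
  proof (cases "g z")
    case (real r)
    have "ereal (Gr (x (Suc k)) - inner (y k) (x (Suc k))) \<le> ereal (r - inner (y k) z)"
      using amin[of k z] unfolding gx real by simp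
    hence "Gr (x (Suc k)) + inner (y k) (z - x (Suc k)) \<le> r" by (simp add: inner_diff_right)
    thus ?thesis unfolding gx real by simp
  next
    case PInf thus ?thesis by simp
  next
    case MInf thus ?thesis using gnm by simp
  qed
  have ysub: "y k \<in> subdiff g (x (Suc k))" for k unfolding subdiff_def using gfin gsub by auto
  have fx: "f (x (Suc k)) = ereal (F (Suc k))" for k
    unfolding f_def dc_fun_def F_def using gx hH by simp
  have fx1: "k \<ge> 1 \<Longrightarrow> f (x k) = ereal (F k)" for k using fx[of "k - 1"] by simp
  define \<sigma> where "\<sigma> = (\<rho>g + \<rho>h) / 2"
  have \<sigma>pos: "\<sigma> > 0" using rho unfolding \<sigma>_def by simp
  define d where "d k = norm (x (Suc k) - x k)" for k
  have dnn: "d k \<ge> 0" for k unfolding d_def by simp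
  have dec: "F (Suc (Suc m)) + \<sigma> * (d (Suc m))^2 \<le> F (Suc m)" for m
  proof -
    let ?u = "x (Suc m)" and ?v = "x (Suc (Suc m))" and ?w = "y (Suc m)"
    have "g ?u \<ge> g ?v + ereal (inner ?w (?u - ?v)) + ereal (\<rho>g / 2 * (norm (?u - ?v))\<^sup>2)"
      using mg ysub[of "Suc m"] unfolding convexity_modulus_def by blast
    hence 1: "Gr ?u \<ge> Gr ?v + inner ?w (?u - ?v) + \<rho>g / 2 * (norm (?u - ?v))\<^sup>2"
      unfolding gx by simp
    have "h ?v \<ge> h ?u + ereal (inner ?w (?v - ?u)) + ereal (\<rho>h / 2 * (norm (?v - ?u))\<^sup>2)"
      using mh yk[of "Suc m"] unfolding convexity_modulus_def by blast
    hence 2: "H ?v \<ge> H ?u + inner ?w (?v - ?u) + \<rho>h / 2 * (norm (?v - ?u))\<^sup>2"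
      unfolding hH by simp
    have 3: "norm (?v - ?u) = d (Suc m)" "norm (?u - ?v) = d (Suc m)" unfolding d_def
      by (simp_all add: norm_minus_commute)
    have 4: "inner ?w (?v - ?u) = - inner ?w (?u - ?v)" by (simp add: inner_diff_right)
    show ?thesis using 1 2 unfolding F_def \<sigma>_def 3 4 by (simp add: field_simps)
  qed
  have decF: "F (Suc (Suc m)) \<le> F (Suc m)" for m
    using dec[of m] \<sigma>pos by (smt (verit) mult_nonneg_nonneg zero_le_power2)
  have Fmono: "F n \<le> F (Suc m)" if "Suc m \<le> n" for m n
    using that
  proof (induction n rule: dec_induct)
    case (step n)
    obtain n' where "n = Suc n'" using step(1) by (cases n) auto
    hence "F (Suc n) \<le> F n" using decF[of n'] by simp
    thus ?case using step by simp
  qed simp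
  obtain c r where r: "strict_mono r" and xr: "(x \<circ> r) \<longlonglongrightarrow> c"
    using bounded_imp_convergent_subsequence[OF bx] by blast
  have cp: "cluster_point x c" unfolding cluster_point_def using r xr by blast
  have lc: "lojasiewicz_at f c" using loj[OF cp] unfolding f_def .
  have lc2: "\<bar>f c\<bar> \<noteq> \<infinity> \<and> (\<exists>\<theta> M V. 0 \<le> \<theta> \<and> \<theta> < 1 \<and> M > 0 \<and> open V \<and> c \<in> V \<and>
       (\<forall>u\<in>V. \<forall>w\<in>limiting_subdiff f u.
          loj_pow \<bar>real_of_ereal (f u) - real_of_ereal (f c)\<bar> \<theta> \<le> M * norm w))"
    using lc unfolding lojasiewicz_at_def .
  have fcfin: "\<bar>f c\<bar> \<noteq> \<infinity>" using lc2 by (rule conjunct1)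
  from conjunct2[OF lc2] obtain \<theta> M V where th: "0 \<le> \<theta> \<and> \<theta> < 1 \<and> M > 0 \<and> open V \<and> c \<in> V \<and>
       (\<forall>u\<in>V. \<forall>w\<in>limiting_subdiff f u.
          loj_pow \<bar>real_of_ereal (f u) - real_of_ereal (f c)\<bar> \<theta> \<le> M * norm w)"
    by (elim exE)
  have th0: "0 \<le> \<theta>" and th1: "\<theta> < 1" and Mpos: "M > 0" and Vo: "open V" and cV: "c \<in> V"
    using th by simp_all
  have KL: "\<forall>u\<in>V. \<forall>w\<in>limiting_subdiff f u.
          loj_pow \<bar>real_of_ereal (f u) - real_of_ereal (f c)\<bar> \<theta> \<le> M * norm w"
    using th by (elim conjE)
  define Fs where "Fs = real_of_ereal (f c)"
  have fc: "f c = ereal Fs" unfolding Fs_def by (rule fin_ereal[OF fcfin])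
  have cdom: "c \<in> edom f" using fc unfolding edom_def by simp
  have r1: "r j \<ge> 1" if "j \<ge> 1" for j using seq_suble[OF r, of j] that by simp
  have ev1: "\<forall>\<^sub>F j in sequentially. f (x (r j)) = ereal (F (r j))"
    unfolding eventually_sequentially using fx1 r1 by (intro exI[of _ 1]) auto
  have "((\<lambda>j. f (x (r j))) \<longlongrightarrow> f c) sequentially"
  proof (rule continuous_on_tendsto_compose[of "edom f" f])
    show "continuous_on (edom f) f" using cont unfolding f_def .
    show "(\<lambda>j. x (r j)) \<longlonglongrightarrow> c" using xr by (simp add: o_def)
    show "c \<in> edom f" by (rule cdom)
    show "\<forall>\<^sub>F j in sequentially. x (r j) \<in> edom f"
      using ev1 by (rule eventually_mono) (simp add: edom_def)
  qed
  hence "((\<lambda>j. ereal (F (r j))) \<longlongrightarrow> ereal Fs) sequentially"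
    unfolding fc using ev1 by (rule Lim_transform_eventually)
  hence Fr: "(\<lambda>j. F (r j)) \<longlonglongrightarrow> Fs" by simp
  have Fge: "Fs \<le> F (Suc m)" for m
  proof (rule LIMSEQ_le_const2[OF Fr])
    show "\<exists>N. \<forall>n\<ge>N. F (r n) \<le> F (Suc m)"
      using seq_suble[OF r] Fmono by (intro exI[of _ "Suc m"]) (meson order_trans)
  qed
  have "decseq (\<lambda>k. F (Suc k))" unfolding decseq_Suc_iff using decF by simp
  then obtain Lm where Lm: "(\<lambda>k. F (Suc k)) \<longlonglongrightarrow> Lm" using decseq_convergent[of _ Fs] Fge by blast
  hence FL0: "F \<longlonglongrightarrow> Lm" by (rule LIMSEQ_imp_Suc)
  have "(F \<circ> r) \<longlonglongrightarrow> Lm" by (rule LIMSEQ_subseq_LIMSEQ[OF FL0 r])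
  hence "Lm = Fs" using Fr LIMSEQ_unique by (auto simp: o_def)
  hence FL: "F \<longlonglongrightarrow> Fs" using FL0 by simp
  define a where "a k = F k - Fs" for k
  have a0: "a \<longlonglongrightarrow> 0" unfolding a_def using LIM_zero[OF FL] .
  have ann: "a (Suc m) \<ge> 0" for m unfolding a_def using Fge[of m] by simp
  define p where "p k = a k powr (1 - \<theta>)" for k
  have pnn: "p k \<ge> 0" for k unfolding p_def by simp
  have p0: "p \<longlonglongrightarrow> 0" unfolding p_def
  proof (rule tendsto_zero_powrI[OF a0 tendsto_const])
    show "\<forall>\<^sub>F k in sequentially. 0 \<le> a k"
      unfolding eventually_sequentially
    proof (intro exI[of _ 1] allI impI)
      fix n :: nat assume "1 \<le> n"
      then obtain m where "n = Suc m" by (cases n) auto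
      thus "0 \<le> a n" using ann by simp
    qed
    show "0 < 1 - \<theta>" using th1 by simp
  qed
  have dF: "(\<lambda>k. (F k - F (Suc k)) / \<sigma>) \<longlonglongrightarrow> 0"
  proof -
    have "(\<lambda>k. F k - F (Suc k)) \<longlonglongrightarrow> Fs - Fs" by (intro tendsto_diff FL LIMSEQ_Suc[OF FL])
    hence "(\<lambda>k. (F k - F (Suc k)) / \<sigma>) \<longlonglongrightarrow> (Fs - Fs) / \<sigma>" by (intro tendsto_divide tendsto_const) (use \<sigma>pos in auto)
    thus ?thesis by simp
  qed
  have d2: "(\<lambda>k. (d k)^2) \<longlonglongrightarrow> 0"
  proof (rule tendsto_sandwich[OF _ _ tendsto_const dF])
    show "\<forall>\<^sub>F k in sequentially. 0 \<le> (d k)^2" by simp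
    show "\<forall>\<^sub>F k in sequentially. (d k)^2 \<le> (F k - F (Suc k)) / \<sigma>"
      unfolding eventually_sequentially
    proof (intro exI[of _ 1] allI impI)
      fix k :: nat assume "1 \<le> k"
      then obtain m where k: "k = Suc m" by (cases k) auto
      have "\<sigma> * (d k)^2 \<le> F k - F (Suc k)" using dec[of m] unfolding k by simp
      thus "(d k)^2 \<le> (F k - F (Suc k)) / \<sigma>" using \<sigma>pos by (simp add: pos_le_divide_eq mult.commute)
    qed
  qed
  have d0: "d \<longlonglongrightarrow> 0"
  proof -
    have "(\<lambda>k. sqrt ((d k)^2)) \<longlonglongrightarrow> sqrt 0" by (rule tendsto_real_sqrt[OF d2])
    thus ?thesis using dnn by simp
  qed
  obtain e L where epos: "e > 0" and lipc: "\<forall>u\<in>ball c e. \<forall>v\<in>ball c e. norm (G u - G v) \<le> L * norm (u - v)"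
    using Glip[of c] by blast
  define L' where "L' = max L 1"
  have L'pos: "L' > 0" unfolding L'_def by simp
  obtain \<delta>0 where \<delta>0: "\<delta>0 > 0" "ball c \<delta>0 \<subseteq> V" using Vo cV open_contains_ball by blast
  define \<delta> where "\<delta> = min \<delta>0 e"
  have \<delta>pos: "\<delta> > 0" unfolding \<delta>_def using \<delta>0 epos by simp
  have bV: "ball c \<delta> \<subseteq> V" using \<delta>0 unfolding \<delta>_def by auto
  have be: "ball c \<delta> \<subseteq> ball c e" unfolding \<delta>_def by auto
  define K where "K = M * L' / ((1 - \<theta>) * \<sigma>)"
  have Kpos: "K \<ge> 0" unfolding K_def using Mpos L'pos th1 \<sigma>pos by simp
  have Key: "2 * d (Suc k) \<le> d k + K * (p (Suc k) - p (Suc (Suc k)))"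
    if xk: "x k \<in> ball c \<delta>" and xk1: "x (Suc k) \<in> ball c \<delta>" for k
  proof -
    define w where "w = y k - G (x (Suc k))"
    have wl: "w \<in> limiting_subdiff f (x (Suc k))" unfolding f_def w_def
      by (rule frechet_sub_limiting[OF frechet_lemma[OF gfin gsub gnm hfin Gder]])
    have "norm w = norm (G (x k) - G (x (Suc k)))" unfolding w_def yG ..
    also have "\<dots> \<le> L * norm (x k - x (Suc k))" using lipc xk xk1 be by blast
    also have "\<dots> \<le> L' * norm (x k - x (Suc k))" unfolding L'_def by (intro mult_right_mono) auto
    also have "\<dots> = L' * d k" unfolding d_def by (simp add: norm_minus_commute)
    finally have wn: "norm w \<le> L' * d k" .
    have "loj_pow \<bar>real_of_ereal (f (x (Suc k))) - real_of_ereal (f c)\<bar> \<theta> \<le> M * norm w"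
      using KL xk1 bV wl by blast
    hence "loj_pow (a (Suc k)) \<theta> \<le> M * norm w"
      unfolding fx fc a_def using ann[of k] unfolding a_def by simp
    also have "\<dots> \<le> M * (L' * d k)" using wn Mpos by simp
    finally have KLk: "loj_pow (a (Suc k)) \<theta> \<le> M * (L' * d k)" .
    define A where "A = a (Suc k)"
    define B where "B = a (Suc (Suc k))"
    define D where "D = d (Suc k)"
    define D0 where "D0 = d k"
    define \<Delta> where "\<Delta> = p (Suc k) - p (Suc (Suc k))"
    have B0: "0 \<le> B" unfolding B_def by (rule ann)
    have A0: "0 \<le> A" unfolding A_def by (rule ann)
    have AB: "B + \<sigma> * D^2 \<le> A" using dec[of k] unfolding A_def B_def D_def a_def by simp
    have BA: "B \<le> A" using AB \<sigma>pos by (smt (verit) mult_nonneg_nonneg zero_le_power2)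
    have \<Delta>0: "\<Delta> \<ge> 0" unfolding \<Delta>_def p_def using powr_mono2[of "1 - \<theta>" B A] B0 BA th1
      unfolding A_def B_def by simp
    have D0nn: "0 \<le> D0" "0 \<le> D" unfolding D0_def D_def by (rule dnn)+
    show ?thesis
    proof (cases "A = 0")
      case True
      have "\<sigma> * D^2 \<le> 0" using AB B0 True by simp
      hence "D^2 \<le> 0" using \<sigma>pos by (simp add: mult_le_0_iff)
      hence "D = 0" by simp
      moreover have "B = 0" using AB B0 True \<sigma>pos by (smt (verit) mult_nonneg_nonneg zero_le_power2)
      ultimately show ?thesis using True D0nn unfolding A_def B_def D_def D0_def p_def by simp
    next
      case False
      hence Apos: "A > 0" using A0 by simp
      have "loj_pow A \<theta> = A powr \<theta>" unfolding loj_pow_def using Apos by simp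
      hence Ath: "A powr \<theta> \<le> M * L' * D0" using KLk unfolding A_def D0_def by simp
      have am: "A powr \<theta> * B powr (1-\<theta>) \<le> \<theta>*A + (1-\<theta>)*B" by (rule amgm_aux[OF th0 th1 Apos B0])
      have AA: "A powr \<theta> * A powr (1-\<theta>) = A" using Apos by (simp add: powr_add[symmetric])
      have "A powr \<theta> * \<Delta> = A powr \<theta> * A powr (1-\<theta>) - A powr \<theta> * B powr (1-\<theta>)"
        unfolding \<Delta>_def p_def A_def B_def by (simp add: right_diff_distrib)
      hence "A powr \<theta> * \<Delta> \<ge> (1-\<theta>) * (A - B)" using AA am by (simp add: algebra_simps)
      moreover have "(1-\<theta>) * (A - B) \<ge> (1-\<theta>) * (\<sigma> * D^2)" using AB th1 by (intro mult_left_mono) auto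
      moreover have "A powr \<theta> * \<Delta> \<le> (M * L' * D0) * \<Delta>" using Ath \<Delta>0 by (rule mult_right_mono)
      ultimately have "((1-\<theta>) * \<sigma>) * D^2 \<le> M * L' * D0 * \<Delta>" by (simp add: mult.assoc)
      hence "D^2 \<le> M * L' * D0 * \<Delta> / ((1-\<theta>) * \<sigma>)" using th1 \<sigma>pos
        by (simp add: pos_le_divide_eq mult.commute)
      also have "\<dots> = D0 * (K * \<Delta>)" unfolding K_def by (simp add: field_simps)
      finally have "D^2 \<le> D0 * (K * \<Delta>)" .
      hence "2 * D \<le> D0 + K * \<Delta>" using sq_step D0nn Kpos \<Delta>0 by blast
      thus ?thesis unfolding D_def D0_def \<Delta>_def .
    qed
  qed
  define \<epsilon> where "\<epsilon> = \<delta> / 3"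
  have \<epsilon>pos: "\<epsilon> > 0" unfolding \<epsilon>_def using \<delta>pos by simp
  have "\<forall>\<^sub>F n in sequentially. d n < \<epsilon>" using order_tendstoD(2)[OF d0 \<epsilon>pos] .
  moreover have "\<forall>\<^sub>F n in sequentially. K * p n < \<epsilon>"
    using order_tendstoD(2)[OF tendsto_mult_right_zero[OF p0] \<epsilon>pos] .
  ultimately have "\<forall>\<^sub>F n in sequentially. d n < \<epsilon> \<and> K * p n < \<epsilon>" by (rule eventually_conj)
  then obtain N1 where N1: "\<And>n. n \<ge> N1 \<Longrightarrow> d n < \<epsilon> \<and> K * p n < \<epsilon>"
    unfolding eventually_sequentially by blast
  have "\<forall>\<^sub>F j in sequentially. dist (x (r j)) c < \<epsilon>"
    using tendstoD[OF xr \<epsilon>pos] by (simp add: o_def)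
  moreover have "\<forall>\<^sub>F j in sequentially. Suc N1 \<le> j" by simp
  ultimately have "\<forall>\<^sub>F j in sequentially. dist (x (r j)) c < \<epsilon> \<and> Suc N1 \<le> j" by (rule eventually_conj)
  then obtain j where j1: "dist (x (r j)) c < \<epsilon>" and j2: "Suc N1 \<le> j"
    unfolding eventually_sequentially by blast
  define m where "m = r j - 1"
  have rj: "r j \<ge> Suc N1" using seq_suble[OF r, of j] j2 by simp
  have Sm: "Suc m = r j" unfolding m_def using rj by simp
  have mN: "m \<ge> N1" using rj unfolding m_def by simp
  have c1: "dist (x (Suc m)) c < \<epsilon>" using j1 Sm by simp
  have c2: "d m < \<epsilon>" using N1[OF mN] by simp
  have c3: "K * p (Suc m) < \<epsilon>" using N1[of "Suc m"] mN by simp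
  define T where "T n = (\<Sum>i<n. d (Suc m + i))" for n
  have I: "(\<forall>i\<le>Suc n. x (m + i) \<in> ball c \<delta>) \<and> T n + d (m + n) \<le> d m + K * (p (Suc m) - p (Suc m + n))" for n
  proof (induction n)
    case 0
    have "dist c (x (Suc m)) < \<delta>" using c1 zero_le_dist[of c "x (Suc m)"] unfolding \<epsilon>_def dist_commute[of "x (Suc m)"] by linarith
    hence b1: "x (Suc m) \<in> ball c \<delta>" by simp
    have "dist c (x m) \<le> dist c (x (Suc m)) + dist (x (Suc m)) (x m)" by (rule dist_triangle)
    also have "dist (x (Suc m)) (x m) = d m" unfolding d_def by (simp add: dist_norm)
    finally have tri: "dist c (x m) \<le> dist c (x (Suc m)) + d m" .
    have "dist c (x m) < \<delta>" using tri c1 c2 zero_le_dist[of c "x (Suc m)"] dnn[of m]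
      unfolding \<epsilon>_def dist_commute[of "x (Suc m)"] by linarith
    hence "x m \<in> ball c \<delta>" by simp
    hence "\<forall>i\<le>Suc 0. x (m + i) \<in> ball c \<delta>" using b1 by (auto simp: le_Suc_eq)
    thus ?case unfolding T_def by simp
  next
    case (Suc n)
    have IH1: "\<forall>i\<le>Suc n. x (m + i) \<in> ball c \<delta>" and
      IH2: "T n + d (m + n) \<le> d m + K * (p (Suc m) - p (Suc m + n))" using Suc by blast+
    have xa: "x (m + n) \<in> ball c \<delta>" using IH1 by simp
    have xb: "x (Suc (m + n)) \<in> ball c \<delta>" using IH1[rule_format, of "Suc n"] by simp
    have k: "2 * d (Suc (m + n)) \<le> d (m + n) + K * (p (Suc (m + n)) - p (Suc (Suc (m + n))))"
      by (rule Key[OF xa xb])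
    have Ts: "T (Suc n) = T n + d (Suc m + n)" unfolding T_def by simp
    have new: "T (Suc n) + d (m + Suc n) \<le> d m + K * (p (Suc m) - p (Suc m + Suc n))"
      using IH2 k unfolding Ts by (simp add: right_diff_distrib)
    have Tb: "T (Suc n) \<le> d m + K * p (Suc m)"
      using new dnn[of "m + Suc n"] Kpos pnn[of "Suc m + Suc n"]
      by (smt (verit) mult_nonneg_nonneg right_diff_distrib)
    have "norm (x (Suc m + Suc n) - x (Suc m)) \<le> (\<Sum>i<Suc n. norm (x (Suc (Suc m + i)) - x (Suc m + i)))"
      by (rule norm_telescope)
    also have "\<dots> = T (Suc n)" unfolding T_def d_def by simp
    finally have tn: "norm (x (Suc m + Suc n) - x (Suc m)) \<le> T (Suc n)" .
    have "dist c (x (Suc m + Suc n)) \<le> dist c (x (Suc m)) + dist (x (Suc m)) (x (Suc m + Suc n))"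
      by (rule dist_triangle)
    also have "dist (x (Suc m)) (x (Suc m + Suc n)) = norm (x (Suc m + Suc n) - x (Suc m))"
      by (simp add: dist_norm norm_minus_commute)
    finally have tri: "dist c (x (Suc m + Suc n)) \<le> dist c (x (Suc m)) + norm (x (Suc m + Suc n) - x (Suc m))" .
    have "dist c (x (Suc m + Suc n)) < \<delta>"
      using tri tn Tb c1 c2 c3 unfolding \<epsilon>_def dist_commute[of "x (Suc m)"] by linarith
    hence "x (m + Suc (Suc n)) \<in> ball c \<delta>" by simp
    hence "\<forall>i\<le>Suc (Suc n). x (m + i) \<in> ball c \<delta>" using IH1 by (auto simp: le_Suc_eq)
    thus ?case using new by blast
  qed
  have Tb: "(\<Sum>i<n. d (i + Suc m)) \<le> d m + K * p (Suc m)" for n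
    using I[of n] dnn[of "m + n"] Kpos pnn[of "Suc m + n"] unfolding T_def
    by (simp add: add.commute) (smt (verit) mult_nonneg_nonneg right_diff_distrib)
  have "summable (\<lambda>i. d (i + Suc m))" by (rule summableI_nonneg_bounded[OF dnn Tb])
  hence "summable d" by (rule iffD1[OF summable_iff_shift])
  hence "summable (\<lambda>k. x (Suc k) - x k)" unfolding d_def by (rule summable_norm_cancel)
  hence "convergent (\<lambda>n. \<Sum>k<n. x (Suc k) - x k)" by (simp add: summable_iff_convergent)
  hence "convergent (\<lambda>n. x n - x 0)" by (simp add: sum_lessThan_telescope)
  then obtain l where "(\<lambda>n. x n - x 0) \<longlonglongrightarrow> l" unfolding convergent_def by blast
  hence "(\<lambda>n. (x n - x 0) + x 0) \<longlonglongrightarrow> l + x 0" by (intro tendsto_add tendsto_const)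
  hence "x \<longlonglongrightarrow> l + x 0" by simp
  thus ?thesis unfolding convergent_def by blast
qed

end
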